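(* Let $F$ be a distribution on $[0,\infty)$ with unbounded support, with $\hat\gamma\in(0,\infty]$ (so that $\varphi(\hat\gamma)\in(1,\infty]$). If for every fixed $y>0$ $$\liminf_{x\to\infty}\frac{\overline{F}(x-y)}{\overline{F}(x)}\ge e^{\hat\gamma y},$$ then $$\liminf_{x\to\infty}\frac{\overline{F*F}(x)}{\overline{F}(x)}=2\varphi(\hat\gamma).$$
   Context: $\overline{F}(x)=F(x,\infty)$ is the tail of $F$; unbounded support means $\overline{F}(x)>0$ for all $x$. $\varphi(\gamma)=\int_0^\infty e^{\gamma x}F(dx)\in(0,\infty]$, $\hat\gamma=\sup\{\gamma:\varphi(\gamma)<\infty\}\in[0,\infty]$, and $\varphi(\hat\gamma)=\lim_{\gamma\uparrow\hat\gamma}\varphi(\gamma)\in[1,\infty]$. When $\hat\gamma=\infty$, $e^{\hat\gamma y}$ is interpreted as $+\infty$ for $y>0$. *)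

theory Defs
  imports "HOL-Probability.Probability"
begin

definition tail :: "real measure \<Rightarrow> real \<Rightarrow> real" where
  "tail F x = measure F {x<..}"

definition mgf :: "real measure \<Rightarrow> real \<Rightarrow> ennreal" where
  "mgf F \<gamma> = (\<integral>\<^sup>+ x. ennreal (exp (\<gamma> * x)) \<partial>F)"

definition gamma_hat :: "real measure \<Rightarrow> ereal" where
  "gamma_hat F = (SUP \<gamma>\<in>{\<gamma>::real. mgf F \<gamma> < \<infinity>}. ereal \<gamma>)"

text \<open>\<phi>(\<gamma>-hat) = lim_{\<gamma> \<uparrow> \<gamma>-hat} \<phi>(\<gamma>); since \<phi> is nondecreasing (F lives on
  [0,\<infinity>)), this left limit equals the supremum over \<gamma> < \<gamma>-hat.\<close>
definition mgf_hat :: "real measure \<Rightarrow> ennreal" where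
  "mgf_hat F = (SUP \<gamma>\<in>{\<gamma>::real. ereal \<gamma> < gamma_hat F}. mgf F \<gamma>)"

definition exp_ereal :: "ereal \<Rightarrow> real \<Rightarrow> ereal" where
  "exp_ereal g y = (if g = \<infinity> then \<infinity> else ereal (exp (real_of_ereal g * y)))"

end

theory Submission
  imports Defs
begin

lemma conv_tail_emeasure:
  assumes P: "prob_space F" and sF: "sets F = sets borel"
  shows "emeasure (F \<star> F) {x<..} = (\<integral>\<^sup>+b. ennreal (tail F (x - b)) \<partial>F)"
proof -
  interpret prob_space F by fact
  have spF: "space F = space borel" using sets_eq_imp_space_eq[OF sF] by simp
  have fm: "finite_measure F" by unfold_locales
  have "emeasure (F \<star> F) {x<..} = (\<integral>\<^sup>+a. emeasure F {b. b + a \<in> {x<..}} \<partial>F)"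
    by (rule convolution_emeasure) (auto simp: fm sF spF)
  also have "\<dots> = (\<integral>\<^sup>+b. ennreal (tail F (x - b)) \<partial>F)"
  proof (rule nn_integral_cong)
    fix a
    have "{b. b + a \<in> {x<..}} = {x - a<..}" by auto
    then show "emeasure F {b. b + a \<in> {x<..}} = ennreal (tail F (x - a))"
      by (simp add: tail_def emeasure_eq_measure)
  qed
  finally show ?thesis .
qed

lemma conv_tail:
  assumes P: "prob_space F" and sF: "sets F = sets borel"
  shows "ennreal (tail (F \<star> F) x) = (\<integral>\<^sup>+b. ennreal (tail F (x - b)) \<partial>F)"
proof -
  interpret prob_space F by fact
  have fm: "finite_measure F" by unfold_locales
  have "finite_measure (F \<star> F)" by (rule convolution_finite) (auto simp: fm sF)
  then have "emeasure (F \<star> F) {x<..} = ennreal (tail (F \<star> F) x)"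
    by (simp add: tail_def finite_measure.emeasure_eq_measure)
  then show ?thesis using conv_tail_emeasure[OF P sF] by simp
qed

lemma tail_mono_meas:
  assumes P: "prob_space F" and sF: "sets F = sets borel"
  shows "(\<lambda>b. tail F (x - b)) \<in> borel_measurable F"
proof -
  interpret prob_space F by fact
  have "(\<lambda>b. tail F (x - b)) \<in> borel_measurable borel"
  proof (rule borel_measurable_mono)
    show "mono (\<lambda>b. tail F (x - b))"
      unfolding mono_def tail_def
      by (auto intro!: finite_measure_mono simp: sF)
  qed
  then show ?thesis by (subst measurable_cong_sets[OF sF refl])
qed

lemma conv_bound:
  assumes P: "prob_space F" and sF: "sets F = sets borel" and x: "x > 2*A"
  shows "2 * (\<integral>\<^sup>+b. ennreal (tail F (x - b)) * indicator {..A} b \<partial>F) \<le> ennreal (tail (F \<star> F) x)"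
proof -
  interpret prob_space F by fact
  interpret pair_sigma_finite F F by unfold_locales
  note [measurable_cong] = sF
  define t where "t b = ennreal (tail F (x - b))" for b
  have tm[measurable]: "t \<in> borel_measurable F"
    unfolding t_def using tail_mono_meas[OF P sF] by measurable
  define h where "h a b = indicator {A<..} a * indicator {..A} b * (indicator {x<..} (a+b) :: ennreal)" for a b
  have hm: "(\<lambda>(a,b). h a b) \<in> borel_measurable (F \<Otimes>\<^sub>M F)"
    unfolding h_def by measurable
  have split: "(\<integral>\<^sup>+b. t b \<partial>F) = (\<integral>\<^sup>+b. t b * indicator {..A} b \<partial>F) + (\<integral>\<^sup>+b. t b * indicator {A<..} b \<partial>F)"
    apply (subst nn_integral_add[symmetric])
      apply measurable
    by (auto intro!: nn_integral_cong split: split_indicator)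
  have i1: "(\<integral>\<^sup>+a. \<integral>\<^sup>+b. h a b \<partial>F \<partial>F) \<le> (\<integral>\<^sup>+a. t a * indicator {A<..} a \<partial>F)"
  proof (rule nn_integral_mono)
    fix a
    have "(\<integral>\<^sup>+b. h a b \<partial>F) \<le> (\<integral>\<^sup>+b. indicator {A<..} a * indicator {x-a<..} b \<partial>F)"
      by (rule nn_integral_mono) (auto simp: h_def split: split_indicator)
    also have "\<dots> = indicator {A<..} a * emeasure F {x-a<..}"
      by (rule nn_integral_cmult_indicator) (simp add: sF)
    also have "\<dots> = t a * indicator {A<..} a"
      by (simp add: t_def tail_def emeasure_eq_measure mult.commute)
    finally show "(\<integral>\<^sup>+b. h a b \<partial>F) \<le> t a * indicator {A<..} a" .
  qed
  have i2: "(\<integral>\<^sup>+b. \<integral>\<^sup>+a. h a b \<partial>F \<partial>F) = (\<integral>\<^sup>+b. t b * indicator {..A} b \<partial>F)"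
  proof (rule nn_integral_cong)
    fix b
    have "(\<integral>\<^sup>+a. h a b \<partial>F) = (\<integral>\<^sup>+a. indicator {..A} b * indicator {x-b<..} a \<partial>F)"
      using x by (intro nn_integral_cong) (auto simp: h_def split: split_indicator)
    also have "\<dots> = indicator {..A} b * emeasure F {x-b<..}"
      by (rule nn_integral_cmult_indicator) (simp add: sF)
    also have "\<dots> = t b * indicator {..A} b"
      by (simp add: t_def tail_def emeasure_eq_measure mult.commute)
    finally show "(\<integral>\<^sup>+a. h a b \<partial>F) = t b * indicator {..A} b" .
  qed
  have i3: "(\<integral>\<^sup>+b. \<integral>\<^sup>+a. h a b \<partial>F \<partial>F) = (\<integral>\<^sup>+a. \<integral>\<^sup>+b. h a b \<partial>F \<partial>F)"
    by (rule Fubini'[OF hm])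
  have "2 * (\<integral>\<^sup>+b. t b * indicator {..A} b \<partial>F) \<le> (\<integral>\<^sup>+b. t b \<partial>F)"
    using i1 i2 i3 unfolding split by (simp add: mult_2 add_left_mono)
  also have "\<dots> = ennreal (tail (F \<star> F) x)"
    unfolding t_def by (rule conv_tail[OF P sF, symmetric])
  finally show ?thesis unfolding t_def .
qed

lemma lower_A:
  assumes P: "prob_space F" and sF: "sets F = sets borel"
    and AE0: "AE x in F. 0 \<le> x" and pos: "\<And>x. tail F x > 0"
    and hyp: "\<And>y. y > 0 \<Longrightarrow> ereal (exp (\<gamma>*y)) \<le> Liminf at_top (\<lambda>x. ereal (tail F (x - y) / tail F x))"
    and c1: "ennreal c < (\<integral>\<^sup>+b. ennreal (exp (\<gamma>*b)) * indicator {..A} b \<partial>F)"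
  shows "eventually (\<lambda>x. 2*c < tail (F \<star> F) x / tail F x) at_top"
proof (rule ccontr)
  interpret prob_space F by fact
  note [measurable_cong] = sF
  define r where "r x = tail (F \<star> F) x / tail F x" for x
  have r0: "r x \<ge> 0" for x using pos[of x] unfolding r_def tail_def by simp
  assume "\<not> ?thesis"
  then have "\<forall>N. \<exists>x\<ge>N. \<not> 2*c < r x"
    unfolding eventually_at_top_linorder r_def by auto
  then have "\<forall>n. \<exists>x. real n + 2*\<bar>A\<bar> + 1 \<le> x \<and> \<not> 2*c < r x" by blast
  then obtain xs where xs: "\<forall>n. real n + 2*\<bar>A\<bar> + 1 \<le> xs n \<and> \<not> 2*c < r (xs n)"
    by (metis choice)
  then have xs1: "\<And>n. xs n \<ge> real n + 2*\<bar>A\<bar> + 1" and xs2: "\<And>n. \<not> 2*c < r (xs n)" by auto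
  have c0: "c \<ge> 0" using xs2[of 0] r0[of "xs 0"] by simp
  have xs_lim: "filterlim xs at_top sequentially"
    by (rule filterlim_at_top_mono[OF filterlim_real_sequentially]) (use xs1 in \<open>auto intro!: always_eventually\<close>, smt (verit) xs1)
  define f where "f n b = ennreal (tail F (xs n - b) / tail F (xs n)) * indicator {..A} b" for n b
  have tmeas: "\<And>n. (\<lambda>b. tail F (xs n - b)) \<in> borel_measurable F" by (rule tail_mono_meas[OF P sF])
  have fm: "\<And>n. f n \<in> borel_measurable F"
    unfolding f_def using tmeas by measurable
  have bound: "(\<integral>\<^sup>+b. f n b \<partial>F) \<le> ennreal c" for n
  proof -
    define T where "T = tail F (xs n)"
    have T0: "T > 0" using pos unfolding T_def by simp
    have xA: "xs n > 2*A" using xs1[of n] by linarith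
    have eq: "f n b = ennreal (tail F (xs n - b)) * indicator {..A} b * ennreal (1/T)" for b
      unfolding f_def T_def using T0 unfolding T_def
      by (simp add: divide_inverse ennreal_mult'' mult.commute mult.left_commute tail_def)
    have "2 * (\<integral>\<^sup>+b. f n b \<partial>F) = 2 * (\<integral>\<^sup>+b. ennreal (tail F (xs n - b)) * indicator {..A} b \<partial>F) * ennreal (1/T)"
      unfolding eq by (subst nn_integral_multc) (use tmeas in \<open>measurable, simp add: mult.assoc\<close>)
    also have "\<dots> \<le> ennreal (tail (F \<star> F) (xs n)) * ennreal (1/T)"
      by (rule mult_right_mono[OF conv_bound[OF P sF xA]]) simp
    also have "\<dots> = ennreal (r (xs n))"
      unfolding r_def T_def using T0 unfolding T_def
      by (simp add: divide_inverse ennreal_mult'')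
    also have "\<dots> \<le> ennreal (2*c)" using xs2[of n] by (simp add: ennreal_leI)
    also have "\<dots> = 2 * ennreal c" by (simp add: ennreal_mult c0)
    finally show ?thesis by (subst (asm) ennreal_mult_le_mult_iff) auto
  qed
  have lim: "AE b in F. ennreal (exp (\<gamma>*b)) * indicator {..A} b \<le> liminf (\<lambda>n. f n b)"
    using AE0
  proof eventually_elim
    case (elim b)
    show ?case
    proof (cases "b \<le> A")
      case False then show ?thesis by simp
    next
      case bA: True
      have "ennreal (exp (\<gamma>*b)) \<le> liminf (\<lambda>n. ennreal (tail F (xs n - b) / tail F (xs n)))"
      proof (cases "b = 0")
        case True
        then have eq1: "(\<lambda>n. ennreal (tail F (xs n - b) / tail F (xs n))) = (\<lambda>n. 1)"
          using pos by (auto simp: less_imp_neq[symmetric])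
        show ?thesis unfolding eq1 using True by (subst Liminf_const) auto
      next
        case False
        then have bpos: "b > 0" using elim by simp
        show ?thesis
        proof (subst le_Liminf_iff, intro allI impI)
          fix y :: ennreal assume y: "y < ennreal (exp (\<gamma>*b))"
          have yt: "y < top" using y ennreal_less_top[of "exp (\<gamma>*b)"] by (rule order.strict_trans)
          define y0 where "y0 = enn2real y"
          have y0a: "y = ennreal y0" unfolding y0_def using yt by simp
          have y0b: "0 \<le> y0" unfolding y0_def by simp
          have y0c: "y0 < exp (\<gamma>*b)" using y unfolding y0a using y0b by (simp add: ennreal_less_iff)
          note y0 = y0a y0b y0c
          have "\<forall>z<ereal (exp (\<gamma>*b)). eventually (\<lambda>x. z < ereal (tail F (x - b) / tail F x)) at_top"
            using hyp[OF bpos] by (simp only: le_Liminf_iff)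
          then have "eventually (\<lambda>x. ereal y0 < ereal (tail F (x - b) / tail F x)) at_top"
            using y0(3) by (metis less_ereal.simps(1))
          then have "eventually (\<lambda>n. ereal y0 < ereal (tail F (xs n - b) / tail F (xs n))) sequentially"
            by (rule eventually_compose_filterlim[OF _ xs_lim])
          then show "eventually (\<lambda>n. y < ennreal (tail F (xs n - b) / tail F (xs n))) sequentially"
            by eventually_elim (use y0 in \<open>auto intro!: ennreal_lessI\<close>)
        qed
      qed
      then show ?thesis using bA unfolding f_def by simp
    qed
  qed
  have "(\<integral>\<^sup>+b. ennreal (exp (\<gamma>*b)) * indicator {..A} b \<partial>F) \<le> (\<integral>\<^sup>+b. liminf (\<lambda>n. f n b) \<partial>F)"
    by (rule nn_integral_mono_AE[OF lim])
  also have "\<dots> \<le> liminf (\<lambda>n. \<integral>\<^sup>+b. f n b \<partial>F)"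
    by (rule nn_integral_liminf[OF fm])
  also have "\<dots> \<le> ennreal c"
    by (rule Liminf_le) (auto intro: always_eventually bound)
  finally show False using c1 by simp
qed

lemma layer_cake:
  fixes M :: "real measure" and G :: "real \<Rightarrow> real"
  assumes fm: "finite_measure M" and sM: "sets M = sets borel"
    and Gm[measurable]: "G \<in> borel_measurable borel" and G0: "\<And>z. 0 \<le> G z"
  shows "(\<integral>\<^sup>+z. ennreal (G z) \<partial>M) = (\<integral>\<^sup>+t. (\<integral>\<^sup>+z. indicator {0..<G z} t \<partial>M) \<partial>lborel)"
proof -
  interpret finite_measure M by fact
  interpret pair_sigma_finite M lborel by unfold_locales
  note [measurable_cong] = sM
  have ind: "indicator {0..<G z} t = (if 0 \<le> t \<and> t < G z then 1 else (0::ennreal))" for z t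
    by (simp split: split_indicator)
  have pm: "(\<lambda>(z,t). indicator {0..<G z} t :: ennreal) \<in> borel_measurable (M \<Otimes>\<^sub>M lborel)"
    unfolding ind by measurable
  have "(\<integral>\<^sup>+z. ennreal (G z) \<partial>M) = (\<integral>\<^sup>+z. (\<integral>\<^sup>+t. indicator {0..<G z} t \<partial>lborel) \<partial>M)"
  proof (rule nn_integral_cong)
    fix z
    show "ennreal (G z) = (\<integral>\<^sup>+t. indicator {0..<G z} t \<partial>lborel)"
      using G0[of z] by (simp add: emeasure_lborel_Ico)
  qed
  also have "\<dots> = (\<integral>\<^sup>+t. (\<integral>\<^sup>+z. indicator {0..<G z} t \<partial>M) \<partial>lborel)"
    using Fubini'[of "\<lambda>z t. indicator {0..<G z} t", OF pm] by simp
  finally show ?thesis .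
qed

lemma layer_compare:
  fixes M N :: "real measure" and G :: "real \<Rightarrow> real"
  assumes fM: "finite_measure M" and sM: "sets M = sets borel"
    and fN: "finite_measure N" and sN: "sets N = sets borel"
    and Gm[measurable]: "G \<in> borel_measurable borel" and G0: "\<And>z. 0 \<le> G z"
    and cmp: "\<And>t. t \<ge> 0 \<Longrightarrow> ennreal K * emeasure N {z. t < G z} \<le> emeasure M {z. t < G z}"
  shows "ennreal K * (\<integral>\<^sup>+z. ennreal (G z) \<partial>N) \<le> (\<integral>\<^sup>+z. ennreal (G z) \<partial>M)"
proof -
  interpret N: finite_measure N by fact
  interpret M: finite_measure M by fact
  note [measurable_cong] = sM sN
  have ind: "indicator {0..<G z} t = (if 0 \<le> t \<and> t < G z then 1 else (0::ennreal))" for z t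
    by (simp split: split_indicator)
  have pm: "(\<lambda>(t,z). indicator {0..<G z} t :: ennreal) \<in> borel_measurable (lborel \<Otimes>\<^sub>M N)"
    unfolding ind by measurable
  have inm: "(\<lambda>t. \<integral>\<^sup>+z. indicator {0..<G z} t \<partial>N) \<in> borel_measurable lborel"
    using N.borel_measurable_nn_integral[of "\<lambda>t z. indicator {0..<G z} t", OF pm] by simp
  have ev: "(\<integral>\<^sup>+z. indicator {0..<G z} t \<partial>L) = indicator {0..} t * emeasure L {z. t < G z}"
    if "sets L = sets borel" for L :: "real measure" and t
  proof -
    have "(\<integral>\<^sup>+z. indicator {0..<G z} t \<partial>L) = (\<integral>\<^sup>+z. indicator {0..} t * indicator {z. t < G z} z \<partial>L)"
      by (rule nn_integral_cong) (simp split: split_indicator)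
    also have "\<dots> = indicator {0..} t * emeasure L {z. t < G z}"
      by (rule nn_integral_cmult_indicator) (use that in simp)
    finally show ?thesis .
  qed
  have "ennreal K * (\<integral>\<^sup>+z. ennreal (G z) \<partial>N) = ennreal K * (\<integral>\<^sup>+t. (\<integral>\<^sup>+z. indicator {0..<G z} t \<partial>N) \<partial>lborel)"
    using layer_cake[OF fN sN Gm G0] by simp
  also have "\<dots> = (\<integral>\<^sup>+t. ennreal K * (\<integral>\<^sup>+z. indicator {0..<G z} t \<partial>N) \<partial>lborel)"
    by (rule nn_integral_cmult[OF inm, symmetric])
  also have "\<dots> \<le> (\<integral>\<^sup>+t. (\<integral>\<^sup>+z. indicator {0..<G z} t \<partial>M) \<partial>lborel)"
  proof (rule nn_integral_mono)
    fix t
    show "ennreal K * (\<integral>\<^sup>+z. indicator {0..<G z} t \<partial>N) \<le> (\<integral>\<^sup>+z. indicator {0..<G z} t \<partial>M)"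
      unfolding ev[OF sN] ev[OF sM]
      using cmp[of t] by (cases "t \<ge> 0") (auto simp: mult.left_commute)
  qed
  also have "\<dots> = (\<integral>\<^sup>+z. ennreal (G z) \<partial>M)"
    using layer_cake[OF fM sM Gm G0] by simp
  finally show ?thesis .
qed

definition psi :: "real \<Rightarrow> real \<Rightarrow> nat \<Rightarrow> real \<Rightarrow> real" where
  "psi g s n z = exp (g*z) * (exp (s * min (max z 0) (real n)) - 1)"

definition uu :: "real \<Rightarrow> real \<Rightarrow> nat \<Rightarrow> real \<Rightarrow> real" where
  "uu g s n z = exp (g*z) * exp (s * min (max z 0) (real n))"

lemma psi_nonneg: "s \<ge> 0 \<Longrightarrow> psi g s n z \<ge> 0"
  unfolding psi_def by (intro mult_nonneg_nonneg) auto

lemma uu_eq: "uu g s n z = exp (g*z) + psi g s n z"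
  unfolding uu_def psi_def by (simp add: algebra_simps)

lemma psi_meas[measurable]: "psi g s n \<in> borel_measurable borel"
  unfolding psi_def by measurable

lemma uu_meas[measurable]: "uu g s n \<in> borel_measurable borel"
  unfolding uu_def by measurable

lemma psi_cont: "continuous_on UNIV (psi g s n)"
  unfolding psi_def by (intro continuous_intros)

lemma psi_mono: assumes "g \<ge> 0" "s \<ge> 0" shows "mono (psi g s n)"
proof (rule monoI)
  fix a b :: real assume ab: "a \<le> b"
  have "exp (s * min (max a 0) (real n)) \<le> exp (s * min (max b 0) (real n))"
    using ab assms by (auto intro!: mult_left_mono)
  moreover have "exp (g*a) \<le> exp (g*b)" using ab assms by (auto intro!: mult_left_mono)
  moreover have "0 \<le> s * min (max a 0) (real n)" using assms by simp
  ultimately show "psi g s n a \<le> psi g s n b"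
    unfolding psi_def by (intro mult_mono) auto
qed

lemma psi_strict:
  assumes g: "g > 0" and s: "s > 0" and n: "n \<ge> 1" and x0: "x0 \<ge> 1" and a: "x0 \<le> a" and ab: "a < b"
  shows "psi g s n a < psi g s n b"
proof -
  have m: "min (max a 0) (real n) \<ge> 1" using a x0 n by auto
  have c1: "exp (s * min (max a 0) (real n)) - 1 > 0" using m s
    by (smt (verit) exp_gt_one mult_pos_pos)
  have c2: "exp (s * min (max a 0) (real n)) \<le> exp (s * min (max b 0) (real n))"
    using ab s by (auto intro!: mult_left_mono)
  have e: "exp (g*a) < exp (g*b)" using ab g by simp
  have "psi g s n a < exp (g*b) * (exp (s * min (max a 0) (real n)) - 1)"
    unfolding psi_def by (rule mult_strict_right_mono[OF e c1])
  also have "\<dots> \<le> psi g s n b" unfolding psi_def using c2 by (intro mult_left_mono) auto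
  finally show ?thesis .
qed

lemma psi_big:
  assumes g: "g > 0" and s: "s > 0" and n: "n \<ge> 1" and b: "b \<ge> 1"
  shows "psi g s n b \<ge> g * b * s"
proof -
  have m: "min (max b 0) (real n) \<ge> 1" using b n by auto
  have "s \<le> s * min (max b 0) (real n)" using m s by simp
  then have "exp s \<le> exp (s * min (max b 0) (real n))" by (subst exp_le_cancel_iff)
  moreover have "exp s \<ge> 1 + s" by (rule exp_ge_add_one_self)
  ultimately have c1: "exp (s * min (max b 0) (real n)) - 1 \<ge> s" by linarith
  have e: "exp (g*b) \<ge> g*b" using exp_ge_add_one_self[of "g*b"] by linarith
  have "g * b * s \<le> exp (g*b) * s" using e s by (intro mult_right_mono) auto
  also have "\<dots> \<le> psi g s n b" unfolding psi_def using c1 by (intro mult_left_mono) auto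
  finally show ?thesis .
qed

lemma level_set:
  fixes \<psi> :: "real \<Rightarrow> real"
  assumes mono: "mono \<psi>" and strict: "\<And>a b. x0 \<le> a \<Longrightarrow> a < b \<Longrightarrow> \<psi> a < \<psi> b"
    and cont: "continuous_on UNIV \<psi>" and bb: "b \<ge> x0" "\<psi> b \<ge> \<psi> x0 + t" and t: "t \<ge> 0"
  shows "\<exists>q\<ge>x0. {z. t < max 0 (\<psi> z - \<psi> x0)} = {q<..}"
proof -
  obtain q where q: "q \<ge> x0" "q \<le> b" "\<psi> q = \<psi> x0 + t"
    using IVT'[of \<psi> x0 "\<psi> x0 + t" b] bb t continuous_on_subset[OF cont] by auto
  have "{z. t < max 0 (\<psi> z - \<psi> x0)} = {q<..}"
  proof (intro set_eqI iffI)
    fix z assume "z \<in> {z. t < max 0 (\<psi> z - \<psi> x0)}"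
    then have "\<psi> q < \<psi> z" using q t by auto
    then show "z \<in> {q<..}" using mono unfolding mono_def by (meson greaterThan_iff not_le)
  next
    fix z assume "z \<in> {q<..}"
    then have "\<psi> q < \<psi> z" using strict[OF q(1)] by auto
    then show "z \<in> {z. t < max 0 (\<psi> z - \<psi> x0)}" using q by auto
  qed
  then show ?thesis using q by blast
qed

lemma conv_nn_mult:
  assumes P: "prob_space F" and sF: "sets F = sets borel"
    and fm[measurable]: "f \<in> borel_measurable borel"
    and sub: "\<And>x y. f (x + y) \<le> f x * f y" and f0: "\<And>x. f x \<ge> 0"
  shows "(\<integral>\<^sup>+z. ennreal (f z) \<partial>(F \<star> F)) \<le> (\<integral>\<^sup>+z. ennreal (f z) \<partial>F) * (\<integral>\<^sup>+z. ennreal (f z) \<partial>F)"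
proof -
  interpret prob_space F by fact
  note [measurable_cong] = sF
  have fmF: "finite_measure F" by unfold_locales
  have "(\<integral>\<^sup>+z. ennreal (f z) \<partial>(F \<star> F)) = (\<integral>\<^sup>+x. \<integral>\<^sup>+y. ennreal (f (x + y)) \<partial>F \<partial>F)"
    by (rule nn_integral_convolution) (auto simp: fmF sF)
  also have "\<dots> \<le> (\<integral>\<^sup>+x. \<integral>\<^sup>+y. ennreal (f x) * ennreal (f y) \<partial>F \<partial>F)"
    by (intro nn_integral_mono) (use sub f0 in \<open>auto simp: ennreal_mult[symmetric] intro!: ennreal_leI\<close>)
  also have "\<dots> = (\<integral>\<^sup>+x. ennreal (f x) * (\<integral>\<^sup>+y. ennreal (f y) \<partial>F) \<partial>F)"
    by (intro nn_integral_cong nn_integral_cmult) measurable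
  also have "\<dots> = (\<integral>\<^sup>+z. ennreal (f z) \<partial>F) * (\<integral>\<^sup>+z. ennreal (f z) \<partial>F)"
    by (rule nn_integral_multc) measurable
  finally show ?thesis .
qed

lemma conv_nn_exp:
  assumes P: "prob_space F" and sF: "sets F = sets borel"
  shows "(\<integral>\<^sup>+z. ennreal (exp (g*z)) \<partial>(F \<star> F)) = (\<integral>\<^sup>+z. ennreal (exp (g*z)) \<partial>F) * (\<integral>\<^sup>+z. ennreal (exp (g*z)) \<partial>F)"
proof -
  interpret prob_space F by fact
  note [measurable_cong] = sF
  have fmF: "finite_measure F" by unfold_locales
  have "(\<integral>\<^sup>+z. ennreal (exp (g*z)) \<partial>(F \<star> F)) = (\<integral>\<^sup>+x. \<integral>\<^sup>+y. ennreal (exp (g*(x + y))) \<partial>F \<partial>F)"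
    by (rule nn_integral_convolution) (auto simp: fmF sF)
  also have "\<dots> = (\<integral>\<^sup>+x. \<integral>\<^sup>+y. ennreal (exp (g*x)) * ennreal (exp (g*y)) \<partial>F \<partial>F)"
    by (intro nn_integral_cong) (simp add: ennreal_mult[symmetric] distrib_left exp_add)
  also have "\<dots> = (\<integral>\<^sup>+x. ennreal (exp (g*x)) * (\<integral>\<^sup>+y. ennreal (exp (g*y)) \<partial>F) \<partial>F)"
    by (intro nn_integral_cong nn_integral_cmult) measurable
  also have "\<dots> = (\<integral>\<^sup>+z. ennreal (exp (g*z)) \<partial>F) * (\<integral>\<^sup>+z. ennreal (exp (g*z)) \<partial>F)"
    by (rule nn_integral_multc) measurable
  finally show ?thesis .
qed

lemma uu_sub: "s \<ge> 0 \<Longrightarrow> uu g s n (x + y) \<le> uu g s n x * uu g s n y"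
proof -
  assume s: "s \<ge> 0"
  have "min (max (x+y) 0) (real n) \<le> min (max x 0) (real n) + min (max y 0) (real n)" by linarith
  then have "s * min (max (x+y) 0) (real n) \<le> s * min (max x 0) (real n) + s * min (max y 0) (real n)"
    using s by (metis distrib_left mult_left_mono)
  then show ?thesis unfolding uu_def
    by (simp add: exp_add[symmetric] distrib_left algebra_simps)
qed

lemma upper_core:
  fixes F :: "real measure" and g \<phi> \<delta> x0 :: real
  assumes P: "prob_space F" and sF: "sets F = sets borel" and AE0: "AE x in F. 0 \<le> x"
    and g0: "g > 0" and phi0: "\<phi> \<ge> 0" and phi: "mgf F g = ennreal \<phi>"
    and inf: "\<And>s. s > 0 \<Longrightarrow> mgf F (g + s) = \<top>"
    and dpos: "0 < \<delta>" and d1: "\<delta> \<le> 1" and x0: "x0 \<ge> 1"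
    and tl: "\<And>x. x \<ge> x0 \<Longrightarrow> tail (F \<star> F) x \<ge> (2*\<phi>+\<delta>) * tail F x"
  shows False
proof -
  interpret prob_space F by fact
  note [measurable_cong] = sF
  have fmF: "finite_measure F" by unfold_locales
  have fmFF: "finite_measure (F \<star> F)" by (rule convolution_finite) (auto simp: fmF sF)
  define K where "K = 2*\<phi>+\<delta>"
  have K0: "K > 0" unfolding K_def using phi0 dpos by simp
  define s where "s = min (1/(2*x0)) (min (\<delta>/(8*(\<phi>+1))) (\<delta>^2/(32*K*exp(g*x0)*x0)))"
  have s0: "s > 0" unfolding s_def using x0 dpos phi0 K0 by auto
  have sx0: "s * x0 \<le> 1/2"
  proof -
    have "s \<le> 1/(2*x0)" unfolding s_def by simp
    then show ?thesis using x0 by (simp add: field_simps)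
  qed
  have shalf: "s \<le> 1/2" using sx0 x0 s0
    by (smt (verit) mult_le_cancel_left1)
  have s2: "s \<le> \<delta>/(8*(\<phi>+1))" unfolding s_def by simp
  have s3: "s \<le> \<delta>^2/(32*K*exp(g*x0)*x0)" unfolding s_def by simp
  define D where "D n = (\<integral>\<^sup>+z. ennreal (psi g s n z) \<partial>F)" for n
  have Phi: "(\<integral>\<^sup>+z. ennreal (exp (g*z)) \<partial>F) = ennreal \<phi>"
    using phi unfolding mgf_def by simp
  have U1: "(\<integral>\<^sup>+z. ennreal (uu g s n z) \<partial>F) = ennreal \<phi> + D n" for n
  proof -
    have "(\<integral>\<^sup>+z. ennreal (uu g s n z) \<partial>F) = (\<integral>\<^sup>+z. ennreal (exp (g*z)) + ennreal (psi g s n z) \<partial>F)"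
      using s0 by (intro nn_integral_cong) (simp add: uu_eq psi_nonneg ennreal_plus)
    also have "\<dots> = ennreal \<phi> + D n"
      unfolding D_def Phi[symmetric] by (rule nn_integral_add) measurable
    finally show ?thesis .
  qed
  have U2: "D n < \<top>" for n
  proof -
    have "D n \<le> (\<integral>\<^sup>+z. ennreal (exp (s * real n) - 1) * ennreal (exp (g*z)) \<partial>F)"
      unfolding D_def
    proof (intro nn_integral_mono)
      fix z
      have "exp (s * min (max z 0) (real n)) \<le> exp (s * real n)" using s0 by simp
      then have "psi g s n z \<le> (exp (s * real n) - 1) * exp (g*z)"
        unfolding psi_def by (simp add: mult.commute)
      then show "ennreal (psi g s n z) \<le> ennreal (exp (s * real n) - 1) * ennreal (exp (g*z))"
        by (simp add: ennreal_mult''[symmetric] ennreal_leI)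
    qed
    also have "\<dots> = ennreal (exp (s * real n) - 1) * ennreal \<phi>"
      unfolding Phi[symmetric] by (rule nn_integral_cmult) measurable
    also have "\<dots> < \<top>" by (simp add: ennreal_mult_less_top)
    finally show ?thesis .
  qed
  have U3: "D 0 = 0" unfolding D_def psi_def by simp
  have U4: "D (Suc n) \<le> D n + ennreal (exp s - 1) * (ennreal \<phi> + D n)" for n
  proof -
    have pw: "ennreal (psi g s (Suc n) z) \<le> ennreal (psi g s n z) + ennreal (exp s - 1) * ennreal (uu g s n z)" for z
    proof -
      have "min (max z 0) (real (Suc n)) \<le> 1 + min (max z 0) (real n)" by auto
      then have "s * min (max z 0) (real (Suc n)) \<le> s + s * min (max z 0) (real n)"
        using s0 by (metis distrib_left mult.right_neutral mult_left_mono less_imp_le)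
      then have "exp (s * min (max z 0) (real (Suc n))) \<le> exp s * exp (s * min (max z 0) (real n))"
        by (simp add: exp_add[symmetric])
      then have "uu g s (Suc n) z \<le> exp s * uu g s n z"
        unfolding uu_def by (simp add: mult.left_commute)
      then have "psi g s (Suc n) z \<le> psi g s n z + (exp s - 1) * uu g s n z"
        unfolding uu_eq by (simp add: algebra_simps)
      then have "ennreal (psi g s (Suc n) z) \<le> ennreal (psi g s n z + (exp s - 1) * uu g s n z)"
        by (rule ennreal_leI)
      also have "\<dots> = ennreal (psi g s n z) + ennreal ((exp s - 1) * uu g s n z)"
        using s0 psi_nonneg[of s g n z] unfolding uu_def by (intro ennreal_plus) auto
      also have "ennreal ((exp s - 1) * uu g s n z) = ennreal (exp s - 1) * ennreal (uu g s n z)"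
        unfolding uu_def by (rule ennreal_mult'') simp
      finally show ?thesis .
    qed
    have "D (Suc n) \<le> (\<integral>\<^sup>+z. ennreal (psi g s n z) + ennreal (exp s - 1) * ennreal (uu g s n z) \<partial>F)"
      unfolding D_def by (rule nn_integral_mono) (rule pw)
    also have "\<dots> = D n + ennreal (exp s - 1) * (\<integral>\<^sup>+z. ennreal (uu g s n z) \<partial>F)"
      unfolding D_def
      apply (subst nn_integral_add)
        apply measurable
      apply (subst nn_integral_cmult)
       apply measurable
      done
    finally show ?thesis unfolding U1 .
  qed
  have U5: "\<exists>n. ennreal (\<delta>/4) < D n"
  proof (rule ccontr)
    assume "\<not> ?thesis"
    then have Dle: "\<And>n. D n \<le> ennreal (\<delta>/4)" by (simp add: not_less)
    define pinf where "pinf z = exp (g*z) * (exp (s * max z 0) - 1)" for z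
    have pinf_meas[measurable]: "pinf \<in> borel_measurable borel" unfolding pinf_def by measurable
    have inc: "incseq (\<lambda>n z. ennreal (psi g s n z))"
    proof (rule incseq_SucI, rule le_funI)
      fix n z
      have "exp (s * min (max z 0) (real n)) \<le> exp (s * min (max z 0) (real (Suc n)))"
        using s0 by (auto intro!: mult_left_mono)
      then show "ennreal (psi g s n z) \<le> ennreal (psi g s (Suc n) z)"
        unfolding psi_def by (intro ennreal_leI mult_left_mono) auto
    qed
    have sup: "(SUP n. ennreal (psi g s n z)) = ennreal (pinf z)" for z
    proof (rule antisym)
      show "(SUP n. ennreal (psi g s n z)) \<le> ennreal (pinf z)"
      proof (rule SUP_least)
        fix n
        have "exp (s * min (max z 0) (real n)) \<le> exp (s * max z 0)"
          using s0 by (auto intro!: mult_left_mono)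
        then show "ennreal (psi g s n z) \<le> ennreal (pinf z)"
          unfolding psi_def pinf_def by (intro ennreal_leI mult_left_mono) auto
      qed
      have "pinf z = psi g s (nat \<lceil>max z 0\<rceil>) z"
      proof -
        have "min (max z 0) (real (nat \<lceil>max z 0\<rceil>)) = max z 0"
          by (simp add: min_def)
        then show ?thesis unfolding pinf_def psi_def by simp
      qed
      then show "ennreal (pinf z) \<le> (SUP n. ennreal (psi g s n z))"
        by (auto intro: SUP_upper2)
    qed
    have "(\<integral>\<^sup>+z. ennreal (pinf z) \<partial>F) = (SUP n. D n)"
      unfolding D_def sup[symmetric]
      by (rule nn_integral_monotone_convergence_SUP[OF inc]) measurable
    also have "\<dots> \<le> ennreal (\<delta>/4)" by (rule SUP_least) (rule Dle)
    finally have pinf_le: "(\<integral>\<^sup>+z. ennreal (pinf z) \<partial>F) \<le> ennreal (\<delta>/4)" .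
    have "mgf F (g + s) = (\<integral>\<^sup>+z. ennreal (exp (g*z)) + ennreal (pinf z) \<partial>F)"
      unfolding mgf_def
    proof (rule nn_integral_cong_AE)
      show "AE z in F. ennreal (exp ((g + s) * z)) = ennreal (exp (g*z)) + ennreal (pinf z)"
        using AE0
      proof eventually_elim
        case (elim z)
        have "0 \<le> exp (s * z) - 1" using elim s0 by simp
        then have "ennreal (exp (g*z)) + ennreal (pinf z) = ennreal (exp (g*z) + exp (g*z) * (exp (s * z) - 1))"
          unfolding pinf_def using elim by (subst ennreal_plus) auto
        also have "\<dots> = ennreal (exp ((g + s) * z))"
          by (simp add: algebra_simps exp_add[symmetric])
        finally show ?case by simp
      qed
    qed
    also have "\<dots> = ennreal \<phi> + (\<integral>\<^sup>+z. ennreal (pinf z) \<partial>F)"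
      unfolding Phi[symmetric] by (rule nn_integral_add) measurable
    also have "\<dots> \<le> ennreal \<phi> + ennreal (\<delta>/4)" using pinf_le by (rule add_left_mono)
    also have "\<dots> < \<top>" by simp
    finally show False using inf[OF s0] by simp
  qed
  define n where "n = (LEAST n. ennreal (\<delta>/4) < D n)"
  have n1: "ennreal (\<delta>/4) < D n" unfolding n_def using U5 by (rule LeastI_ex)
  have nmin: "\<And>m. m < n \<Longrightarrow> \<not> ennreal (\<delta>/4) < D m" unfolding n_def by (rule not_less_Least)
  have "n \<noteq> 0"
  proof
    assume "n = 0" then show False using n1 U3 by simp
  qed
  then obtain m where nm: "n = Suc m" using not0_implies_Suc by blast
  have nge1: "n \<ge> 1" using nm by simp
  define d where "d = enn2real (D n)"
  define dm where "dm = enn2real (D m)"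
  have Dn: "D n = ennreal d" unfolding d_def using U2[of n] by simp
  have Dm: "D m = ennreal dm" unfolding dm_def using U2[of m] by simp
  have dnn: "d \<ge> 0" unfolding d_def by simp
  have dm0: "dm \<ge> 0" unfolding dm_def by simp
  have hd1: "\<delta>/4 < d" using n1 unfolding Dn using ennreal_less_iff[of "\<delta>/4" d] dpos by simp
  have hdm: "dm \<le> \<delta>/4"
  proof -
    have "\<not> ennreal (\<delta>/4) < D m" using nmin[of m] nm by simp
    then have "ennreal dm \<le> ennreal (\<delta>/4)" unfolding Dm by (simp add: not_less)
    then show ?thesis using dpos by (simp add: ennreal_le_iff)
  qed
  have es': "exp s \<le> 1 + 2 * s" using real_exp_bound_lemma[of s] s0 shalf by simp
  then have es: "exp s - 1 \<le> 2 * s" by simp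
  have es0: "exp s - 1 \<ge> 0" using s0 by simp
  have hd2: "d \<le> \<delta>/2"
  proof -
    have "ennreal d \<le> ennreal dm + ennreal (exp s - 1) * (ennreal \<phi> + ennreal dm)"
      using U4[of m] unfolding nm[symmetric] Dn Dm .
    also have "\<dots> = ennreal (dm + (exp s - 1) * (\<phi> + dm))"
      using es0 dm0 phi0 by (simp add: ennreal_plus[symmetric] ennreal_mult[symmetric] del: ennreal_plus)
    finally have "d \<le> dm + (exp s - 1) * (\<phi> + dm)"
      using es0 dm0 phi0 by (subst (asm) ennreal_le_iff) auto
    also have "\<dots> \<le> \<delta>/4 + (2 * s) * (\<phi> + 1)"
      using hdm es d1 dm0 phi0 es0 by (intro add_mono mult_mono) auto
    also have "(2 * s) * (\<phi> + 1) \<le> \<delta>/4"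
    proof -
      have "s * (8*(\<phi>+1)) \<le> \<delta>" using s2 phi0 by (simp add: field_simps)
      then show ?thesis by (simp add: algebra_simps)
    qed
    finally show ?thesis by simp
  qed
  define G where "G z = max 0 (psi g s n z - psi g s n x0)" for z
  have G0: "G z \<ge> 0" for z unfolding G_def by simp
  have Gm[measurable]: "G \<in> borel_measurable borel" unfolding G_def by measurable
  have sFF: "sets (F \<star> F) = sets borel" by simp
  have C3: "ennreal K * (\<integral>\<^sup>+z. ennreal (G z) \<partial>F) \<le> (\<integral>\<^sup>+z. ennreal (G z) \<partial>(F \<star> F))"
  proof (rule layer_compare[OF fmFF sFF fmF sF Gm G0])
    fix t :: real assume t: "t \<ge> 0"
    define b where "b = max x0 ((psi g s n x0 + t)/(g * s))"
    have b1: "b \<ge> x0" unfolding b_def by simp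
    have "psi g s n b \<ge> g * b * s" using psi_big[OF g0 s0 nge1] b1 x0 by simp
    moreover have "g * b * s \<ge> psi g s n x0 + t"
    proof -
      have "b \<ge> (psi g s n x0 + t)/(g * s)" unfolding b_def by simp
      then show ?thesis using g0 s0 by (simp add: field_simps mult.commute mult.left_commute)
    qed
    ultimately have b2: "psi g s n b \<ge> psi g s n x0 + t" by simp
    obtain q where q: "q \<ge> x0" "{z. t < G z} = {q<..}"
      using level_set[OF psi_mono[OF less_imp_le[OF g0] less_imp_le[OF s0]] psi_strict[OF g0 s0 nge1 x0] psi_cont b1 b2 t]
      unfolding G_def by blast
    have "ennreal K * emeasure F {q<..} = ennreal (K * tail F q)"
      unfolding tail_def using K0 by (simp add: emeasure_eq_measure ennreal_mult)
    also have "\<dots> \<le> ennreal (tail (F \<star> F) q)"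
      using tl[OF q(1)] unfolding K_def by (rule ennreal_leI)
    also have "\<dots> = emeasure (F \<star> F) {q<..}"
      unfolding tail_def using fmFF by (simp add: finite_measure.emeasure_eq_measure)
    finally show "ennreal K * emeasure F {z. t < G z} \<le> emeasure (F \<star> F) {z. t < G z}"
      unfolding q(2) .
  qed
  define c' where "c' = exp (g*x0) * (exp (s*x0) - 1)"
  have c'0: "c' \<ge> 0" unfolding c'_def using s0 x0 by simp
  have C4: "D n \<le> ennreal c' + (\<integral>\<^sup>+z. ennreal (G z) \<partial>F)"
  proof -
    have px0: "psi g s n x0 \<le> c'"
    proof -
      have "exp (s * min (max x0 0) (real n)) \<le> exp (s*x0)" using s0 x0 by simp
      then show ?thesis unfolding psi_def c'_def by (intro mult_left_mono) auto
    qed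
    have "D n \<le> (\<integral>\<^sup>+z. ennreal c' + ennreal (G z) \<partial>F)"
      unfolding D_def
    proof (rule nn_integral_mono)
      fix z
      have "psi g s n z \<le> c' + G z" using px0 unfolding G_def by simp
      then show "ennreal (psi g s n z) \<le> ennreal c' + ennreal (G z)"
        using c'0 G0[of z] by (simp add: ennreal_plus[symmetric] ennreal_leI del: ennreal_plus)
    qed
    also have "\<dots> = ennreal c' + (\<integral>\<^sup>+z. ennreal (G z) \<partial>F)"
      by (subst nn_integral_add) (auto simp: emeasure_space_1)
    finally show ?thesis .
  qed
  define E where "E = (\<integral>\<^sup>+z. ennreal (psi g s n z) \<partial>(F \<star> F))"
  have C5: "(\<integral>\<^sup>+z. ennreal (G z) \<partial>(F \<star> F)) \<le> E"
    unfolding E_def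
  proof (rule nn_integral_mono)
    fix z
    show "ennreal (G z) \<le> ennreal (psi g s n z)"
      unfolding G_def using psi_nonneg[of s g n x0] s0 psi_nonneg[of s g n z]
      by (intro ennreal_leI) auto
  qed
  have C1: "(\<integral>\<^sup>+z. ennreal (uu g s n z) \<partial>(F \<star> F)) \<le> (ennreal \<phi> + ennreal d) * (ennreal \<phi> + ennreal d)"
  proof -
    have "(\<integral>\<^sup>+z. ennreal (uu g s n z) \<partial>(F \<star> F)) \<le> (\<integral>\<^sup>+z. ennreal (uu g s n z) \<partial>F) * (\<integral>\<^sup>+z. ennreal (uu g s n z) \<partial>F)"
    proof (rule conv_nn_mult[OF P sF uu_meas])
      show "\<And>x y. uu g s n (x + y) \<le> uu g s n x * uu g s n y" using uu_sub s0 by simp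
      show "\<And>x. uu g s n x \<ge> 0" by (simp add: uu_def)
    qed
    then show ?thesis unfolding U1 Dn .
  qed
  have C2: "(\<integral>\<^sup>+z. ennreal (uu g s n z) \<partial>(F \<star> F)) = ennreal \<phi> * ennreal \<phi> + E"
  proof -
    have "(\<integral>\<^sup>+z. ennreal (uu g s n z) \<partial>(F \<star> F)) = (\<integral>\<^sup>+z. ennreal (exp (g*z)) + ennreal (psi g s n z) \<partial>(F \<star> F))"
      using s0 by (intro nn_integral_cong) (simp add: uu_eq psi_nonneg ennreal_plus)
    also have "\<dots> = (\<integral>\<^sup>+z. ennreal (exp (g*z)) \<partial>(F \<star> F)) + E"
      unfolding E_def by (rule nn_integral_add) auto
    also have "(\<integral>\<^sup>+z. ennreal (exp (g*z)) \<partial>(F \<star> F)) = ennreal \<phi> * ennreal \<phi>"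
      using conv_nn_exp[OF P sF, of g] unfolding Phi .
    finally show ?thesis .
  qed
  have Efin: "E < \<top>"
  proof -
    have "E \<le> ennreal \<phi> * ennreal \<phi> + E" by simp
    also have "\<dots> \<le> (ennreal \<phi> + ennreal d) * (ennreal \<phi> + ennreal d)" using C1 C2 by simp
    also have "\<dots> < \<top>" by (simp add: ennreal_mult_less_top)
    finally show ?thesis .
  qed
  define e where "e = enn2real E"
  have Ee: "E = ennreal e" unfolding e_def using Efin by simp
  have e0: "e \<ge> 0" unfolding e_def by simp
  have R1: "\<phi>*\<phi> + e \<le> (\<phi> + d) * (\<phi> + d)"
  proof -
    have "ennreal (\<phi>*\<phi> + e) \<le> ennreal ((\<phi> + d) * (\<phi> + d))"
      using C1 C2 phi0 dnn e0 unfolding Ee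
      by (simp add: ennreal_plus[symmetric] ennreal_mult[symmetric] del: ennreal_plus)
    then show ?thesis using phi0 dnn by (subst (asm) ennreal_le_iff) auto
  qed
  have R2: "K * d \<le> K * c' + e"
  proof -
    have "ennreal (K * d) = ennreal K * D n" unfolding Dn using K0 dnn by (simp add: ennreal_mult)
    also have "\<dots> \<le> ennreal K * (ennreal c' + (\<integral>\<^sup>+z. ennreal (G z) \<partial>F))"
      using C4 by (rule mult_left_mono) simp
    also have "\<dots> = ennreal (K * c') + ennreal K * (\<integral>\<^sup>+z. ennreal (G z) \<partial>F)"
      using K0 c'0 by (simp add: distrib_left ennreal_mult)
    also have "\<dots> \<le> ennreal (K * c') + E"
      using C3 C5 by (intro add_left_mono) simp
    also have "\<dots> = ennreal (K * c' + e)" unfolding Ee using K0 c'0 e0 by (simp add: ennreal_plus)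
    finally show ?thesis using K0 c'0 e0 by (subst (asm) ennreal_le_iff) auto
  qed
  have R3: "K * c' \<le> \<delta>^2/16"
  proof -
    have "exp (s*x0) \<le> 1 + 2*(s*x0)" using real_exp_bound_lemma[of "s*x0"] s0 x0 sx0 by simp
    then have "c' \<le> exp (g*x0) * (2*(s*x0))" unfolding c'_def by (intro mult_left_mono) auto
    then have "K * c' \<le> K * (exp (g*x0) * (2*(s*x0)))" using K0 by (intro mult_left_mono) auto
    also have "\<dots> = 2 * (s * (K*exp(g*x0)*x0))" by (simp add: algebra_simps)
    also have "s * (K*exp(g*x0)*x0) \<le> \<delta>^2/32"
    proof -
      have "0 < K*exp(g*x0)*x0" using K0 x0 by simp
      then show ?thesis using s3 by (simp add: field_simps)
    qed
    finally show ?thesis by simp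
  qed
  have f1: "2*(d*d) \<le> \<delta>*d"
  proof -
    have "d * d \<le> d * (\<delta>/2)" using hd2 dnn by (intro mult_left_mono) auto
    then show ?thesis by (simp add: algebra_simps)
  qed
  have f2: "\<delta>*\<delta> < 4*(\<delta>*d)"
  proof -
    have "\<delta> * (\<delta>/4) < \<delta> * d" using hd1 dnn dpos by (intro mult_strict_left_mono) auto
    then show ?thesis by (simp add: algebra_simps)
  qed
  have f3: "K * d = 2*(\<phi>*d) + \<delta>*d" unfolding K_def by (simp add: algebra_simps)
  have f4: "(\<phi> + d) * (\<phi> + d) = \<phi>*\<phi> + 2*(\<phi>*d) + d*d" by (simp add: algebra_simps)
  have f5: "\<delta>^2 = \<delta>*\<delta>" by (simp add: power2_eq_square)
  have f6: "\<delta>*\<delta> \<ge> 0" by simp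
  show False using f1 f2 f3 f4 f5 f6 R1 R2 R3 by linarith
qed

lemma mgf_mono:
  assumes AE0: "AE x in F. 0 \<le> x" and ab: "a \<le> b"
  shows "mgf F a \<le> mgf F b"
  unfolding mgf_def
  by (rule nn_integral_mono_AE) (use AE0 in eventually_elim, use ab in \<open>auto intro!: ennreal_leI mult_right_mono\<close>)

lemma G3:
  assumes AE0: "AE x in F. 0 \<le> x" and lt: "ereal \<gamma> < gamma_hat F"
  shows "mgf F \<gamma> < \<top>"
proof -
  from lt obtain \<gamma>' where "mgf F \<gamma>' < \<top>" "ereal \<gamma> < ereal \<gamma>'"
    unfolding gamma_hat_def less_SUP_iff by auto
  then show ?thesis using mgf_mono[OF AE0, of \<gamma> \<gamma>'] by simp
qed

lemma G4: "mgf F \<gamma> < \<top> \<Longrightarrow> ereal \<gamma> \<le> gamma_hat F"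
  unfolding gamma_hat_def by (rule SUP_upper) simp

lemma mgf_lower:
  assumes P: "prob_space F" and sF: "sets F = sets borel" and \<gamma>: "\<gamma> \<ge> 0"
  shows "ennreal (exp \<gamma> * tail F 1) \<le> mgf F \<gamma>"
proof -
  interpret prob_space F by fact
  have "ennreal (exp \<gamma> * tail F 1) = (\<integral>\<^sup>+z. ennreal (exp \<gamma>) * indicator {1<..} z \<partial>F)"
    by (subst nn_integral_cmult_indicator) (auto simp: sF tail_def emeasure_eq_measure ennreal_mult)
  also have "\<dots> \<le> mgf F \<gamma>"
    unfolding mgf_def
  proof (rule nn_integral_mono)
    fix z
    show "ennreal (exp \<gamma>) * indicator {1<..} z \<le> ennreal (exp (\<gamma> * z))"
    proof (cases "1 < z")
      case True
      then have "\<gamma> \<le> \<gamma> * z" using \<gamma> mult_left_mono[of 1 z \<gamma>] by simp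
      then show ?thesis using True by (simp add: ennreal_leI)
    qed simp
  qed
  finally show ?thesis .
qed

lemma G5:
  assumes P: "prob_space F" and sF: "sets F = sets borel" and pos: "\<And>x. tail F x > 0"
    and inf: "gamma_hat F = \<infinity>"
  shows "mgf_hat F = \<top>"
proof -
  define t where "t = tail F 1"
  have t0: "t > 0" unfolding t_def using pos by simp
  have "of_nat n \<le> mgf_hat F" for n
  proof -
    define \<gamma> where "\<gamma> = ln (real n / t + 1)"
    have g0: "\<gamma> \<ge> 0" unfolding \<gamma>_def using t0 by simp
    have "0 \<le> real n / t" using t0 by simp
    then have "exp \<gamma> = real n / t + 1" unfolding \<gamma>_def by simp
    then have "real n \<le> exp \<gamma> * t" using t0 by (simp add: field_simps)
    then have "of_nat n \<le> ennreal (exp \<gamma> * t)" by (simp add: ennreal_of_nat_eq_real_of_nat ennreal_leI)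
    also have "\<dots> \<le> mgf F \<gamma>" unfolding t_def by (rule mgf_lower[OF P sF g0])
    also have "\<dots> \<le> mgf_hat F" unfolding mgf_hat_def using inf by (intro SUP_upper) simp
    finally show ?thesis .
  qed
  then have "(SUP n. of_nat n) \<le> mgf_hat F" by (intro SUP_least) auto
  then show ?thesis unfolding ennreal_SUP_of_nat_eq_top by (simp add: top_unique)
qed

lemma G6:
  assumes sF: "sets F = sets borel" and gh: "gamma_hat F = ereal g"
  shows "mgf F g \<le> mgf_hat F"
proof -
  define f where "f k z = ennreal (exp ((g - inverse (real (Suc k))) * z))" for k z
  have lim: "liminf (\<lambda>k. f k z) = ennreal (exp (g * z))" for z
  proof (rule lim_imp_Liminf)
    have "(\<lambda>k. g - inverse (real (Suc k))) \<longlonglongrightarrow> g"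
      using tendsto_diff[OF tendsto_const LIMSEQ_inverse_real_of_nat, of g] by simp
    then show "(\<lambda>k. f k z) \<longlonglongrightarrow> ennreal (exp (g * z))"
      unfolding f_def by (intro tendsto_ennrealI tendsto_intros)
  qed simp
  note [measurable_cong] = sF
  have fm: "\<And>k. f k \<in> borel_measurable F" unfolding f_def by measurable
  have "mgf F g = (\<integral>\<^sup>+z. liminf (\<lambda>k. f k z) \<partial>F)" unfolding mgf_def lim ..
  also have "\<dots> \<le> liminf (\<lambda>k. \<integral>\<^sup>+z. f k z \<partial>F)" by (rule nn_integral_liminf[OF fm])
  also have "\<dots> \<le> mgf_hat F"
  proof (rule Liminf_le)
    show "\<forall>\<^sub>F k in sequentially. (\<integral>\<^sup>+z. f k z \<partial>F) \<le> mgf_hat F"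
    proof (rule always_eventually, rule allI)
      fix k
      have "(\<integral>\<^sup>+z. f k z \<partial>F) = mgf F (g - inverse (real (Suc k)))" unfolding f_def mgf_def ..
      also have "\<dots> \<le> mgf_hat F" unfolding mgf_hat_def gh by (intro SUP_upper) simp
      finally show "(\<integral>\<^sup>+z. f k z \<partial>F) \<le> mgf_hat F" .
    qed
  qed simp
  finally show ?thesis .
qed

lemma mgf_trunc_SUP:
  assumes sF: "sets F = sets borel"
  shows "mgf F \<gamma> = (SUP n. \<integral>\<^sup>+b. ennreal (exp (\<gamma>*b)) * indicator {..real n} b \<partial>F)"
proof -
  note [measurable_cong] = sF
  have inc: "incseq (\<lambda>n b. ennreal (exp (\<gamma>*b)) * indicator {..real n} b)"
  proof (rule incseq_SucI, rule le_funI)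
    fix n b
    have "indicator {..real n} b \<le> (indicator {..real (Suc n)} b :: ennreal)"
      by (simp split: split_indicator)
    then show "ennreal (exp (\<gamma>*b)) * indicator {..real n} b \<le> ennreal (exp (\<gamma>*b)) * indicator {..real (Suc n)} b"
      by (rule mult_left_mono) simp
  qed
  have sup: "(SUP n. ennreal (exp (\<gamma>*b)) * indicator {..real n} b) = ennreal (exp (\<gamma>*b))" for b
  proof (rule antisym)
    show "(SUP n. ennreal (exp (\<gamma>*b)) * indicator {..real n} b) \<le> ennreal (exp (\<gamma>*b))"
    proof (rule SUP_least)
      fix n
      have "indicator {..real n} b \<le> (1::ennreal)" by (simp split: split_indicator)
      then show "ennreal (exp (\<gamma>*b)) * indicator {..real n} b \<le> ennreal (exp (\<gamma>*b))"
        using mult_left_mono[of "indicator {..real n} b" 1 "ennreal (exp (\<gamma>*b))"] by simp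
    qed
    obtain n :: nat where bn: "b \<le> real n" using real_arch_simple by blast
    have "indicator {..real n} b = (1::ennreal)" using bn by (simp add: indicator_def)
    then have eq: "ennreal (exp (\<gamma>*b)) = ennreal (exp (\<gamma>*b)) * indicator {..real n} b"
      by simp
    have "ennreal (exp (\<gamma>*b)) * indicator {..real n} b \<le> (SUP n. ennreal (exp (\<gamma>*b)) * indicator {..real n} b)"
      by (rule SUP_upper) (rule UNIV_I)
    then show "ennreal (exp (\<gamma>*b)) \<le> (SUP n. ennreal (exp (\<gamma>*b)) * indicator {..real n} b)"
      unfolding eq[symmetric] .
  qed
  have meas: "\<And>n. (\<lambda>b. ennreal (exp (\<gamma>*b)) * indicator {..real n} b) \<in> borel_measurable F"
    by measurable
  have "mgf F \<gamma> = (\<integral>\<^sup>+b. (SUP n. ennreal (exp (\<gamma>*b)) * indicator {..real n} b) \<partial>F)"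
    unfolding mgf_def by (simp only: sup)
  also have "\<dots> = (SUP n. \<integral>\<^sup>+b. ennreal (exp (\<gamma>*b)) * indicator {..real n} b \<partial>F)"
    by (rule nn_integral_monotone_convergence_SUP[OF inc meas])
  finally show ?thesis .
qed

theorem theorem2:
  fixes F :: "real measure"
  assumes "prob_space F"
    and "sets F = sets borel"
    and "AE x in F. 0 \<le> x"
    and "\<And>x. tail F x > 0"
    and "gamma_hat F > 0"
    and "\<And>y. y > 0 \<Longrightarrow>
           Liminf at_top (\<lambda>x. ereal (tail F (x - y) / tail F x)) \<ge> exp_ereal (gamma_hat F) y"
  shows "Liminf at_top (\<lambda>x. ereal (tail (F \<star> F) x / tail F x))
           = 2 * enn2ereal (mgf_hat F)"
proof -
  note P = assms(1) and sF = assms(2) and AE0 = assms(3) and pos = assms(4)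
    and gpos = assms(5) and hyp = assms(6)
  define r where "r x = tail (F \<star> F) x / tail F x" for x
  have r0: "r x \<ge> 0" for x using pos[of x] unfolding r_def tail_def by simp
  define L where "L = Liminf at_top (\<lambda>x. ereal (r x))"
  define M where "M = mgf_hat F"
  have lower: "2 * enn2ereal M \<le> L"
    unfolding L_def
  proof (subst le_Liminf_iff, intro allI impI)
    fix y :: ereal assume y: "y < 2 * enn2ereal M"
    show "\<forall>\<^sub>F x in at_top. y < ereal (r x)"
    proof (cases "y < 0")
      case True
      then show ?thesis using r0 by (auto intro!: always_eventually order.strict_trans2[of y 0])
    next
      case False
      then have "y \<noteq> -\<infinity>" by auto
      moreover have "y \<noteq> \<infinity>" using y by auto
      ultimately obtain y1 where y1: "y = ereal y1" by (cases y) auto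
      have y10: "y1 \<ge> 0" using False y1 by simp
      define c where "c = y1 / 2"
      have c0: "c \<ge> 0" unfolding c_def using y10 by simp
      have "enn2ereal (ennreal y1) < enn2ereal (2 * M)"
        using y y1 y10 by (simp add: times_ennreal.rep_eq)
      then have "ennreal y1 < 2 * M" by (simp add: less_ennreal.rep_eq)
      moreover have "ennreal y1 = 2 * ennreal c"
      proof -
        have "ennreal y1 = ennreal (2 * c)" unfolding c_def by simp
        also have "\<dots> = ennreal 2 * ennreal c" using c0 by (rule ennreal_mult'')
        finally show ?thesis by simp
      qed
      ultimately have "2 * ennreal c < 2 * M" by simp
      then have cM: "ennreal c < M"
      proof (rule contrapos_pp)
        assume "\<not> ennreal c < M"
        then have "M \<le> ennreal c" by simp
        then have "2 * M \<le> 2 * ennreal c" by (rule mult_left_mono) simp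
        then show "\<not> 2 * ennreal c < 2 * M" by simp
      qed
      then obtain \<gamma> where g1: "ereal \<gamma> < gamma_hat F" and g2: "ennreal c < mgf F \<gamma>"
        unfolding M_def mgf_hat_def less_SUP_iff by auto
      then obtain n :: nat where n: "ennreal c < (\<integral>\<^sup>+b. ennreal (exp (\<gamma>*b)) * indicator {..real n} b \<partial>F)"
        unfolding mgf_trunc_SUP[OF sF] less_SUP_iff by auto
      have hyp': "ereal (exp (\<gamma>*y')) \<le> Liminf at_top (\<lambda>x. ereal (tail F (x - y') / tail F x))" if y': "y' > 0" for y'
      proof -
        have "ereal (exp (\<gamma>*y')) \<le> exp_ereal (gamma_hat F) y'"
        proof (cases "gamma_hat F")
          case (real g)
          then have "\<gamma> < g" using g1 by simp
          then have "\<gamma> * y' \<le> g * y'" using y' by simp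
          then show ?thesis using real by (simp add: exp_ereal_def)
        next
          case PInf then show ?thesis by (simp add: exp_ereal_def)
        next
          case MInf then show ?thesis using gpos by simp
        qed
        also have "\<dots> \<le> Liminf at_top (\<lambda>x. ereal (tail F (x - y') / tail F x))" by (rule hyp[OF y'])
        finally show ?thesis .
      qed
      have "eventually (\<lambda>x. 2*c < tail (F \<star> F) x / tail F x) at_top"
        by (rule lower_A[OF P sF AE0 pos hyp' n])
      then show ?thesis
        by eventually_elim (simp add: y1 c_def r_def)
    qed
  qed
  have upper: "L \<le> 2 * enn2ereal M"
  proof (cases "M = \<top>")
    case True
    then show ?thesis by simp
  next
    case Mfin: False
    have "gamma_hat F \<noteq> \<infinity>" using G5[OF P sF pos] Mfin unfolding M_def by auto
    then obtain g where gh: "gamma_hat F = ereal g" using gpos by (cases "gamma_hat F") auto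
    have g0: "g > 0" using gpos gh by simp
    have "mgf F g \<le> M" unfolding M_def by (rule G6[OF sF gh])
    moreover have "M < \<top>" using Mfin by (simp add: top.not_eq_extremum)
    ultimately have mgfin: "mgf F g < \<top>" by (rule order.strict_trans1)
    define \<phi> where "\<phi> = enn2real (mgf F g)"
    have phi: "mgf F g = ennreal \<phi>" unfolding \<phi>_def using mgfin by simp
    have phi0: "\<phi> \<ge> 0" unfolding \<phi>_def by simp
    have inf: "mgf F (g + s) = \<top>" if "s > 0" for s
    proof (rule ccontr)
      assume "mgf F (g + s) \<noteq> \<top>"
      then have "mgf F (g + s) < \<top>" using top.not_eq_extremum by blast
      then have "ereal (g + s) \<le> gamma_hat F" by (rule G4)
      then show False using that gh by simp
    qed
    show ?thesis
    proof (rule ccontr)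
      assume "\<not> L \<le> 2 * enn2ereal M"
      then have LM: "2 * enn2ereal M < L" by simp
      have "ereal \<phi> \<le> enn2ereal M"
        using \<open>mgf F g \<le> M\<close> phi phi0 by (simp add: less_eq_ennreal.rep_eq)
      then have "2 * ereal \<phi> \<le> 2 * enn2ereal M"
        by (rule ereal_mult_left_mono) simp
      then have "ereal (2*\<phi>) \<le> 2 * enn2ereal M" by simp
      then have L2: "ereal (2*\<phi>) < L" using LM by simp
      obtain \<delta> where dpos: "\<delta> > 0" and d1: "\<delta> \<le> 1" and dL: "ereal (2*\<phi> + \<delta>) < L"
      proof (cases L)
        case (real l)
        then have "2*\<phi> < l" using L2 by simp
        define d where "d = min 1 ((l - 2*\<phi>)/2)"
        have "d \<le> (l - 2*\<phi>)/2" unfolding d_def by (rule min.cobounded2)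
        moreover have "(l - 2*\<phi>)/2 < l - 2*\<phi>" using \<open>2*\<phi> < l\<close> by simp
        ultimately have "2*\<phi> + d < l" by linarith
        then have "2*\<phi> + min 1 ((l - 2*\<phi>)/2) < l" unfolding d_def .
        then show ?thesis using that[of "min 1 ((l - 2*\<phi>)/2)"] real \<open>2*\<phi> < l\<close> by auto
      next
        case PInf then show ?thesis using that[of 1] by simp
      next
        case MInf then show ?thesis using L2 by simp
      qed
      have "\<forall>\<^sub>F x in at_top. ereal (2*\<phi> + \<delta>) < ereal (r x)"
        using dL unfolding L_def by (rule less_LiminfD)
      then obtain x1 where x1: "\<And>x. x \<ge> x1 \<Longrightarrow> 2*\<phi> + \<delta> < r x"
        unfolding eventually_at_top_linorder by auto
      define x0 where "x0 = max x1 1"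
      have tl: "tail (F \<star> F) x \<ge> (2*\<phi>+\<delta>) * tail F x" if "x \<ge> x0" for x
      proof -
        have "2*\<phi> + \<delta> < tail (F \<star> F) x / tail F x" using x1[of x] that unfolding x0_def r_def by simp
        then show ?thesis using pos[of x] by (simp add: field_simps)
      qed
      have x01: "x0 \<ge> 1" unfolding x0_def by simp
      show False
        by (rule upper_core[OF P sF AE0 g0 phi0 phi inf dpos d1 x01 tl])
    qed
  qed
  have "L = 2 * enn2ereal M" using upper lower by (rule antisym)
  then show ?thesis unfolding L_def M_def r_def .
qed

end
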